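(* Let $G=(V,E)$ be a $d$-regular graph on $n$ vertices whose conductance $\phi^G(V)$ is at least $\varphi$. Let each edge $e\in E$ independently receive a uniformly random label $Y(e)\in\{0,1\}$, and let $G'=(V\times\{0,1\},E')$ be the graph where, for each $e=(u,v)\in E$, $E'$ contains the two edges $(u^0,v^0),(u^1,v^1)$ if $Y(e)=0$ and the two edges $(u^0,v^1),(u^1,v^0)$ if $Y(e)=1$ (writing $v^b$ for $(v,b)$). Then with probability at least $1-2^{2n}e^{-dn/256}$, $G'$ has conductance $\phi^{G'}(V\times\{0,1\})\ge\min(\varphi/4,1/32)$.
   Context: $\mathrm{vol}(S)=\sum_{v\in S}\deg(v)$; $\phi^G_C(S)=|E(S,C\setminus S)|/\mathrm{vol}(S)$; the conductance of $G$ is $\phi^G(V)=\min\{\phi^G_V(S):0<\mathrm{vol}(S)\le\mathrm{vol}(V)/2\}$. *)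

theory Defs
  imports "HOL-Probability.Probability"
begin

definition simple_graph :: "'a set \<Rightarrow> 'a set set \<Rightarrow> bool" where
  "simple_graph V E \<longleftrightarrow> finite V \<and> (\<forall>e\<in>E. \<exists>u v. e = {u, v} \<and> u \<noteq> v \<and> u \<in> V \<and> v \<in> V)"

definition deg :: "'a set set \<Rightarrow> 'a \<Rightarrow> nat" where
  "deg E v = card {e \<in> E. v \<in> e}"

definition regular :: "'a set \<Rightarrow> 'a set set \<Rightarrow> nat \<Rightarrow> bool" where
  "regular V E d \<longleftrightarrow> (\<forall>v\<in>V. deg E v = d)"

definition vol :: "'a set set \<Rightarrow> 'a set \<Rightarrow> nat" where
  "vol E S = (\<Sum>v\<in>S. deg E v)"

definition cut_edges :: "'a set set \<Rightarrow> 'a set \<Rightarrow> 'a set \<Rightarrow> nat" where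
  "cut_edges E S T = card {e \<in> E. \<exists>u v. e = {u, v} \<and> u \<in> S \<and> v \<in> T}"

definition cond_set :: "'a set set \<Rightarrow> 'a set \<Rightarrow> 'a set \<Rightarrow> real" where
  "cond_set E C S = real (cut_edges E S (C - S)) / real (vol E S)"

definition conductance :: "'a set \<Rightarrow> 'a set set \<Rightarrow> real" where
  "conductance V E = Min {cond_set E V S | S. S \<subseteq> V \<and> 0 < vol E S \<and> real (vol E S) \<le> real (vol E V) / 2}"

text \<open>The 2-lift of E with labels Y (True = label 1): vertex (v,b) is v^b;
  edge {u,v} yields {u^b, v^(b xor Y{u,v})} for b in {0,1}.\<close>
definition lift_edges :: "'a set set \<Rightarrow> ('a set \<Rightarrow> bool) \<Rightarrow> ('a \<times> bool) set set" where
  "lift_edges E Y = {{(u, b), (v, b \<noteq> Y {u, v})} | u v b. {u, v} \<in> E \<and> u \<noteq> v}"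

end

theory Submission
  imports Defs
begin


locale lg = fixes V :: "'a set" and E :: "'a set set" and d :: nat
  assumes sg: "simple_graph V E" and reg: "regular V E d"
begin

lemma finV: "finite V" using sg by (simp add: simple_graph_def)

lemma edgeE: assumes "e \<in> E" obtains u v where "e = {u,v}" "u \<noteq> v" "u \<in> V" "v \<in> V"
  using sg assms unfolding simple_graph_def by blast

lemma edge_sub: "e \<in> E \<Longrightarrow> e \<subseteq> V" by (metis edgeE insert_subset empty_subsetI)

lemma finE: "finite E"
proof -
  have "E \<subseteq> Pow V" using edge_sub by blast
  thus ?thesis using finV finite_subset by blast
qed

lemma degV: "v \<in> V \<Longrightarrow> deg E v = d" using reg by (simp add: regular_def)

lemma handshake: assumes "T \<subseteq> V" shows "(\<Sum>v\<in>T. deg E v) = (\<Sum>e\<in>E. card (e \<inter> T))"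
proof -
  have fT: "finite T" using assms finV finite_subset by blast
  have "(\<Sum>v\<in>T. deg E v) = (\<Sum>v\<in>T. \<Sum>e\<in>E. if v \<in> e then 1 else 0)"
    unfolding deg_def by (simp add: sum.inter_filter[OF finE, symmetric])
  also have "\<dots> = (\<Sum>e\<in>E. \<Sum>v\<in>T. if v \<in> e then 1 else 0)" by (rule sum.swap)
  also have "\<dots> = (\<Sum>e\<in>E. card (e \<inter> T))"
  proof (rule sum.cong[OF refl])
    fix e show "(\<Sum>v\<in>T. if v \<in> e then 1 else 0) = card (e \<inter> T)"
      using sum.inter_filter[OF fT, of "\<lambda>_. 1::nat" "\<lambda>v. v \<in> e", symmetric]
      by (simp add: Int_def conj_commute)
  qed
  finally show ?thesis .
qed

lemma card_edge: "e \<in> E \<Longrightarrow> card e = 2" by (metis edgeE card_2_iff)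

lemma card_E: "2 * card E = d * card V"
proof -
  have "(\<Sum>v\<in>V. deg E v) = d * card V" using degV by simp
  moreover have "(\<Sum>e\<in>E. card (e \<inter> V)) = 2 * card E"
    using edge_sub card_edge by (simp add: Int_absorb2)
  ultimately show ?thesis using handshake[of V] by simp
qed

lemma vol_const: "T \<subseteq> V \<Longrightarrow> vol E T = d * card T"
  unfolding vol_def using degV by (simp add: subset_iff)

lemma cross_doubleton: "(\<exists>p q. {a,b} = {p,q} \<and> p \<in> X \<and> q \<in> Y) \<longleftrightarrow> (a \<in> X \<and> b \<in> Y) \<or> (b \<in> X \<and> a \<in> Y)"
  by (auto simp: doubleton_eq_iff)

lemma cut_sym: "cut_edges E S T = cut_edges E T S"
  unfolding cut_edges_def by (rule arg_cong[where f=card], rule Collect_cong, metis insert_commute)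


lemma lift_fst: "f \<in> lift_edges E Y \<Longrightarrow> fst ` f \<in> E"
  unfolding lift_edges_def by auto

lemma lift_sub: "f \<in> lift_edges E Y \<Longrightarrow> f \<subseteq> V \<times> UNIV"
  unfolding lift_edges_def using edge_sub by auto

lemma finite_lift: "finite (lift_edges E Y)"
proof -
  have "lift_edges E Y \<subseteq> Pow (V \<times> UNIV)" using lift_sub by blast
  thus ?thesis by (rule finite_subset) (simp add: finV)
qed

lemma lift_part: assumes "e \<in> E" "e = {u,v}" "u \<noteq> v"
  shows "{f \<in> lift_edges E Y. fst ` f = e} = {{(u,False),(v,Y e)}, {(u,True),(v,\<not> Y e)}}"
proof
  show "{f \<in> lift_edges E Y. fst ` f = e} \<subseteq> {{(u,False),(v,Y e)}, {(u,True),(v,\<not> Y e)}}"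
  proof
    fix f assume "f \<in> {f \<in> lift_edges E Y. fst ` f = e}"
    then obtain u' v' b where f: "f = {(u', b), (v', b \<noteq> Y {u', v'})}" "{u',v'} \<in> E" "u' \<noteq> v'"
      and fe: "fst ` f = e" unfolding lift_edges_def by blast
    have "{u',v'} = {u,v}" using f fe assms by auto
    hence "(u' = u \<and> v' = v) \<or> (u' = v \<and> v' = u)" by (simp add: doubleton_eq_iff)
    moreover have "Y {u',v'} = Y e" using \<open>{u',v'} = {u,v}\<close> assms by simp
    ultimately show "f \<in> {{(u,False),(v,Y e)}, {(u,True),(v,\<not> Y e)}}"
    proof (elim disjE conjE)
      assume "u' = u" "v' = v" "Y {u', v'} = Y e"
      hence "f = {(u, b), (v, b \<noteq> Y e)}" using f(1) by simp
      thus ?thesis by (cases b) auto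
    next
      assume "u' = v" "v' = u" "Y {u', v'} = Y e"
      hence "f = {(v, b), (u, b \<noteq> Y e)}" using f(1) by simp
      thus ?thesis by (cases b; cases "Y e") (auto simp: insert_commute)
    qed
  qed
next
  have "{(u,False),(v,Y e)} \<in> lift_edges E Y"
    unfolding lift_edges_def using assms by (intro CollectI exI[of _ u] exI[of _ v] exI[of _ False]) simp
  moreover have "{(u,True),(v,\<not> Y e)} \<in> lift_edges E Y"
    unfolding lift_edges_def using assms by (intro CollectI exI[of _ u] exI[of _ v] exI[of _ True]) simp
  moreover have "fst ` {(u,False),(v,Y e)} = e" "fst ` {(u,True),(v,\<not> Y e)} = e" using assms(2) by auto
  ultimately show "{{(u,False),(v,Y e)}, {(u,True),(v,\<not> Y e)}} \<subseteq> {f \<in> lift_edges E Y. fst ` f = e}"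
    by simp
qed

lemma count_lift: "card {f \<in> lift_edges E Y. P f} = (\<Sum>e\<in>E. card {f \<in> lift_edges E Y. fst ` f = e \<and> P f})"
proof -
  have "(\<Sum>e\<in>E. \<Sum>f\<in>{x. x \<in> {f \<in> lift_edges E Y. P f} \<and> fst ` x = e}. (1::nat)) = (\<Sum>f\<in>{f \<in> lift_edges E Y. P f}. 1)"
    by (rule sum.group) (use finite_lift finE lift_fst in auto)
  thus ?thesis by (simp add: conj_commute conj_left_commute)
qed

lemma card_filter2: assumes "a \<noteq> b" shows "card {f \<in> {a,b}. P f} = of_bool (P a) + of_bool (P b)"
proof -
  have "card {f \<in> {a,b}. P f} = (\<Sum>f\<in>{a,b}. if P f then 1 else 0)"
    using sum.inter_filter[of "{a,b}" "\<lambda>_. 1::nat" P] by simp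
  also have "\<dots> = of_bool (P a) + of_bool (P b)" using assms by simp
  finally show ?thesis .
qed

lemma count_edge: assumes "e \<in> E" "e = {u,v}" "u \<noteq> v"
  shows "card {f \<in> lift_edges E Y. fst ` f = e \<and> P f} =
     of_bool (P {(u,False),(v,Y e)}) + of_bool (P {(u,True),(v,\<not> Y e)})"
proof -
  have "{f \<in> lift_edges E Y. fst ` f = e \<and> P f} = {f \<in> {f \<in> lift_edges E Y. fst ` f = e}. P f}"
    by blast
  also have "\<dots> = {f \<in> {{(u,False),(v,Y e)}, {(u,True),(v,\<not> Y e)}}. P f}"
    by (simp only: lift_part[OF assms])
  finally have eq: "{f \<in> lift_edges E Y. fst ` f = e \<and> P f} = {f \<in> {{(u,False),(v,Y e)}, {(u,True),(v,\<not> Y e)}}. P f}" .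
  have m1: "(u,False) \<in> {(u,False),(v,Y e)}" by simp
  have m2: "(u,False) \<notin> {(u,True),(v,\<not> Y e)}" using assms(3) by simp
  have "{(u,False),(v,Y e)} \<noteq> {(u,True),(v,\<not> Y e)}" using m1 m2 by metis
  thus ?thesis unfolding eq by (rule card_filter2)
qed

lemma deg_lift: assumes "w \<in> V" shows "deg (lift_edges E Y) (w, b) = d"
proof -
  have "deg (lift_edges E Y) (w, b) = (\<Sum>e\<in>E. card {f \<in> lift_edges E Y. fst ` f = e \<and> (w,b) \<in> f})"
    unfolding deg_def by (rule count_lift)
  also have "\<dots> = (\<Sum>e\<in>E. if w \<in> e then 1 else 0)"
  proof (rule sum.cong[OF refl])
    fix e assume "e \<in> E"
    then obtain u v where uv: "e = {u,v}" "u \<noteq> v" by (rule edgeE)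
    show "card {f \<in> lift_edges E Y. fst ` f = e \<and> (w,b) \<in> f} = (if w \<in> e then 1 else 0)"
      unfolding count_edge[OF \<open>e \<in> E\<close> uv] using uv by (cases b; cases "Y e"; cases "w = u"; cases "w = v"; simp)
  qed
  also have "\<dots> = deg E w" unfolding deg_def by (simp add: sum.inter_filter[OF finE, symmetric])
  finally show ?thesis using degV assms by simp
qed

lemma vol_lift: assumes "S \<subseteq> V \<times> UNIV" shows "vol (lift_edges E Y) S = d * card S"
proof -
  have "(\<Sum>p\<in>S. deg (lift_edges E Y) p) = (\<Sum>p\<in>S. d)"
  proof (rule sum.cong[OF refl])
    fix p assume "p \<in> S" then obtain w b where "p = (w,b)" "w \<in> V" using assms by auto
    thus "deg (lift_edges E Y) p = d" using deg_lift by simp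
  qed
  thus ?thesis unfolding vol_def by simp
qed

lemma cut_lift: assumes "S \<subseteq> V \<times> UNIV"
  shows "cut_edges (lift_edges E Y) S (V \<times> UNIV - S) = (\<Sum>e\<in>E. card {f \<in> lift_edges E Y. fst ` f = e \<and> (\<exists>p q. f = {p,q} \<and> p \<in> S \<and> q \<in> V \<times> UNIV - S)})"
  unfolding cut_edges_def by (rule count_lift)

lemma cut_edge: assumes "e \<in> E" "e = {u,v}" "u \<noteq> v" "u \<in> V" "v \<in> V"
  shows "card {f \<in> lift_edges E Y. fst ` f = e \<and> (\<exists>p q. f = {p,q} \<and> p \<in> S \<and> q \<in> V \<times> UNIV - S)}
    = of_bool (((u,False) \<in> S) \<noteq> ((v, Y e) \<in> S)) + of_bool (((u,True) \<in> S) \<noteq> ((v, \<not> Y e) \<in> S))"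
proof -
  have cr: "\<And>p q. p \<in> V \<times> UNIV \<Longrightarrow> q \<in> V \<times> UNIV \<Longrightarrow>
     (p \<in> S \<and> q \<in> V \<times> UNIV - S \<or> q \<in> S \<and> p \<in> V \<times> UNIV - S) = ((p \<in> S) \<noteq> (q \<in> S))" by blast
  show ?thesis unfolding count_edge[OF assms(1-3)] cross_doubleton
    using cr[of "(u,False)" "(v,Y e)"] cr[of "(u,True)" "(v,\<not> Y e)"] assms(4,5) by simp
qed

end


lemma card_filter_sum: "finite X \<Longrightarrow> real (card {x \<in> X. P x}) = (\<Sum>x\<in>X. of_bool (P x))"
  using sum.inter_filter[of X "\<lambda>_. 1::real" P] by (simp add: of_bool_def)

lemma count_weight:
  fixes E :: "'e set" and Q :: "'e \<Rightarrow> bool \<Rightarrow> bool" and t :: real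
  assumes fE: "finite E" and Q: "\<And>e. \<not> (Q e True \<and> Q e False)"
  shows "real (card {Y \<in> PiE E (\<lambda>_. UNIV :: bool set). t \<le> real (card {e\<in>E. Q e (Y e)})}) \<le> exp (- t) * (1 + exp 1) ^ card E"
proof -
  let ?\<Omega> = "PiE E (\<lambda>_. UNIV :: bool set)"
  let ?M = "\<lambda>Y. real (card {e\<in>E. Q e (Y e)})"
  let ?X = "{Y \<in> ?\<Omega>. t \<le> ?M Y}"
  have fin: "finite ?\<Omega>" using fE by (simp add: finite_PiE)
  have "real (card ?X) = (\<Sum>Y\<in>?X. 1)" by simp
  also have "\<dots> \<le> (\<Sum>Y\<in>?X. exp (?M Y - t))" by (rule sum_mono) simp
  also have "\<dots> \<le> (\<Sum>Y\<in>?\<Omega>. exp (?M Y - t))" by (rule sum_mono2) (use fin in auto)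
  also have "\<dots> = (\<Sum>Y\<in>?\<Omega>. exp (- t) * (\<Prod>e\<in>E. if Q e (Y e) then exp 1 else 1))"
  proof (rule sum.cong[OF refl])
    fix Y
    have "exp (?M Y - t) = exp (- t) * exp (\<Sum>e\<in>E. of_bool (Q e (Y e)))"
      by (simp add: card_filter_sum[OF fE] exp_diff exp_minus field_simps)
    also have "exp (\<Sum>e\<in>E. of_bool (Q e (Y e))) = (\<Prod>e\<in>E. exp (of_bool (Q e (Y e))))"
      by (rule exp_sum[OF fE])
    also have "\<dots> = (\<Prod>e\<in>E. if Q e (Y e) then exp 1 else 1)" by (rule prod.cong) auto
    finally show "exp (?M Y - t) = exp (- t) * (\<Prod>e\<in>E. if Q e (Y e) then exp 1 else 1)" .
  qed
  also have "\<dots> = exp (- t) * (\<Sum>Y\<in>?\<Omega>. \<Prod>e\<in>E. if Q e (Y e) then exp 1 else 1)"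
    by (simp add: sum_distrib_left)
  also have "(\<Sum>Y\<in>?\<Omega>. \<Prod>e\<in>E. if Q e (Y e) then exp 1 else 1) = (\<Prod>e\<in>E. \<Sum>b\<in>UNIV. if Q e b then exp 1 else (1::real))"
    by (rule prod_sum_PiE[symmetric]) (use fE in auto)
  also have "\<dots> \<le> (\<Prod>e\<in>E. 1 + exp 1)"
  proof (rule prod_mono)
    fix e assume "e \<in> E"
    have "(\<Sum>b\<in>UNIV. if Q e b then exp 1 else (1::real)) = (if Q e True then exp 1 else 1) + (if Q e False then exp 1 else 1)"
      by (simp add: UNIV_bool)
    thus "0 \<le> (\<Sum>b\<in>UNIV. if Q e b then exp 1 else (1::real)) \<and> (\<Sum>b\<in>UNIV. if Q e b then exp 1 else (1::real)) \<le> 1 + exp 1"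
      using Q[of e] by auto
  qed
  also have "\<dots> = (1 + exp 1) ^ card E" by simp
  finally show ?thesis by simp
qed

lemma numeric: "1 + exp 1 \<le> 2 * exp (91/128::real)"
proof -
  have "1 + 91/128 + (91/128)^2/2 \<le> exp (91/128::real)" by (rule exp_lower_Taylor_quadratic) simp
  moreover have "exp 1 < (272/100::real)" by (rule e_less_272)
  ultimately show ?thesis by (simp add: power2_eq_square)
qed

lemma numeric2:
  fixes m z :: nat
  assumes "2 * m = z"
  shows "exp (- (23 * real z / 64)) * (1 + exp 1) ^ m \<le> 2 ^ m * exp (- (real z / 256))"
proof -
  have "(1 + exp 1) ^ m \<le> (2 * exp (91/128::real)) ^ m"
    by (rule power_mono[OF numeric]) (simp add: add_nonneg_nonneg)
  also have "\<dots> = 2 ^ m * exp (real m * (91/128))"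
    by (simp only: power_mult_distrib exp_of_nat_mult)
  finally have "exp (- (23 * real z / 64)) * (1 + exp 1) ^ m \<le> exp (- (23 * real z / 64)) * (2 ^ m * exp (real m * (91/128)))"
    by (simp)
  also have "\<dots> = 2 ^ m * (exp (- (23 * real z / 64)) * exp (real m * (91/128)))" by simp
  also have "exp (- (23 * real z / 64)) * exp (real m * (91/128)) = exp (- (real z / 256))"
  proof -
    have "real z = 2 * real m" using assms by simp
    hence "- (23 * real z / 64) + real m * (91/128) = - (real z / 256)" by simp
    thus ?thesis by (simp add: exp_add[symmetric])
  qed
  finally show ?thesis .
qed

context lg begin

lemma cutG:
  assumes cond: "conductance V E \<ge> \<phi>" and dpos: "d > 0" and T: "T \<subseteq> V" "2 * card T \<le> card V"
  shows "\<phi> * d * card T \<le> real (cut_edges E T (V - T))"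
proof (cases "T = {}")
  case True thus ?thesis by (simp add: cut_edges_def)
next
  case False
  have fT: "finite T" using T finV finite_subset by blast
  hence cT: "card T > 0" using False by auto
  let ?X = "{cond_set E V S | S. S \<subseteq> V \<and> 0 < vol E S \<and> real (vol E S) \<le> real (vol E V) / 2}"
  have "?X \<subseteq> cond_set E V ` Pow V" by auto
  hence fin: "finite ?X" using finV by (meson finite_subset finite_imageI finite_Pow_iff)
  have v1: "vol E T = d * card T" using vol_const[OF T(1)] .
  have v2: "vol E V = d * card V" using vol_const[of V] by simp
  have "2 * (d * card T) \<le> d * card V" using T(2) by (metis mult.left_commute mult_le_mono2)
  hence "real (vol E T) \<le> real (vol E V) / 2" unfolding v1 v2 by linarith
  moreover have "0 < vol E T" using v1 dpos cT by simp
  ultimately have mem: "cond_set E V T \<in> ?X" using T(1) by blast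
  have "\<phi> \<le> cond_set E V T" using cond Min_le[OF fin mem] unfolding conductance_def by linarith
  hence "\<phi> \<le> real (cut_edges E T (V - T)) / (real d * real (card T))"
    unfolding cond_set_def v1 by simp
  thus ?thesis using dpos cT by (simp add: pos_le_divide_eq mult.commute mult.left_commute)
qed

lemma edge_bound1:
  assumes "e \<in> E" "S \<subseteq> V \<times> UNIV"
  shows "of_bool (\<exists>a b. e = {a,b} \<and> a \<in> {w\<in>V. (w,False) \<in> S \<or> (w,True) \<in> S} \<and> b \<in> V - {w\<in>V. (w,False) \<in> S \<or> (w,True) \<in> S})
       + of_bool (\<exists>a b. e = {a,b} \<and> a \<in> {w\<in>V. (w,False) \<in> S \<and> (w,True) \<in> S} \<and> b \<in> V - {w\<in>V. (w,False) \<in> S \<and> (w,True) \<in> S})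
     \<le> card {f \<in> lift_edges E Y. fst ` f = e \<and> (\<exists>p q. f = {p,q} \<and> p \<in> S \<and> q \<in> V \<times> UNIV - S)}"
proof -
  obtain u v where uv: "e = {u,v}" "u \<noteq> v" "u \<in> V" "v \<in> V" using assms(1) by (rule edgeE)
  show ?thesis unfolding cut_edge[OF assms(1) uv] unfolding uv(1) cross_doubleton
    using uv(3,4)
    by (cases "(u,False) \<in> S"; cases "(u,True) \<in> S"; cases "(v,False) \<in> S"; cases "(v,True) \<in> S"; cases "Y {u,v}"; simp)
qed

lemma edge_bound2:
  assumes "e \<in> E" "S \<subseteq> V \<times> UNIV"
  shows "real (card (e \<inter> {w\<in>V. ((w,False) \<in> S) \<noteq> ((w,True) \<in> S)}))
       - 2 * of_bool (e \<subseteq> {w\<in>V. ((w,False) \<in> S) \<noteq> ((w,True) \<in> S)} \<and> Y e = (card {w\<in>e. (w,False) \<in> S} = 1))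
     \<le> real (card {f \<in> lift_edges E Y. fst ` f = e \<and> (\<exists>p q. f = {p,q} \<and> p \<in> S \<and> q \<in> V \<times> UNIV - S)})"
proof -
  obtain u v where uv: "e = {u,v}" "u \<noteq> v" "u \<in> V" "v \<in> V" using assms(1) by (rule edgeE)
  let ?A = "{w\<in>V. ((w,False) \<in> S) \<noteq> ((w,True) \<in> S)}"
  have c1: "card (e \<inter> ?A) = of_bool (u \<in> ?A) + of_bool (v \<in> ?A)"
  proof -
    have "e \<inter> ?A = {w \<in> {u,v}. w \<in> ?A}" using uv(1) by blast
    thus ?thesis using card_filter2[OF uv(2)] by simp
  qed
  have c2: "card {w\<in>e. (w,False) \<in> S} = of_bool ((u,False) \<in> S) + of_bool ((v,False) \<in> S)"
    using card_filter2[OF uv(2)] uv(1) by simp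
  have c3: "(e \<subseteq> ?A) = (u \<in> ?A \<and> v \<in> ?A)" using uv(1) by simp
  show ?thesis unfolding cut_edge[OF assms(1) uv] c1 c2 c3
    using uv(3,4) unfolding uv(1)
    by (cases "(u,False) \<in> S"; cases "(u,True) \<in> S"; cases "(v,False) \<in> S"; cases "(v,True) \<in> S"; cases "Y {u,v}"; simp)
qed


lemma perS:
  assumes cond: "conductance V E \<ge> \<phi>" and dpos: "d > 0" and S: "S \<subseteq> V \<times> UNIV" and Sn: "card S \<le> card V"
    and c1: "c \<le> \<phi> / 4" and c2: "c \<le> 1 / 32"
  shows "real (card {Y \<in> PiE E (\<lambda>_. UNIV :: bool set). real (cut_edges (lift_edges E Y) S (V \<times> UNIV - S)) < c * real d * real (card S)})
     \<le> 2 ^ card E * exp (- (real d * real (card V)) / 256)"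
proof -
  define n where "n = card V"
  define U where "U = {w\<in>V. (w,False) \<in> S \<or> (w,True) \<in> S}"
  define B where "B = {w\<in>V. (w,False) \<in> S \<and> (w,True) \<in> S}"
  define A where "A = {w\<in>V. ((w,False) \<in> S) \<noteq> ((w,True) \<in> S)}"
  define S0 where "S0 = {w\<in>V. (w,False) \<in> S}"
  define S1 where "S1 = {w\<in>V. (w,True) \<in> S}"
  define g where "g e = (card {w\<in>e. (w,False) \<in> S} = 1)" for e :: "'a set"
  define M where "M Y = card {e\<in>E. e \<subseteq> A \<and> Y e = g e}" for Y :: "'a set \<Rightarrow> bool"
  define cL where "cL Y = real (cut_edges (lift_edges E Y) S (V \<times> UNIV - S))" for Y
  define Bad where "Bad = {Y \<in> PiE E (\<lambda>_. UNIV :: bool set). cL Y < c * real d * real (card S)}"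
  have fS0: "finite S0" "finite S1" unfolding S0_def S1_def using finV by auto
  have sub: "U \<subseteq> V" "B \<subseteq> V" "A \<subseteq> V" "B \<subseteq> U" unfolding U_def B_def A_def by auto
  have fU: "finite U" "finite B" "finite A" using sub finV finite_subset by blast+
  have cS: "card S = card S0 + card S1"
  proof -
    have eq: "S = (\<lambda>w. (w,False)) ` S0 \<union> (\<lambda>w. (w,True)) ` S1"
    proof (rule set_eqI)
      fix p :: "'a \<times> bool" obtain w b where p: "p = (w,b)" by fastforce
      show "p \<in> S \<longleftrightarrow> p \<in> (\<lambda>w. (w,False)) ` S0 \<union> (\<lambda>w. (w,True)) ` S1"
        using S unfolding p S0_def S1_def by (cases b) auto
    qed
    have "card ((\<lambda>w. (w,False)) ` S0 \<union> (\<lambda>w. (w,True)) ` S1) = card ((\<lambda>w. (w,False)) ` S0) + card ((\<lambda>w. (w,True)) ` S1)"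
      by (rule card_Un_disjoint) (use fS0 in auto)
    also have "\<dots> = card S0 + card S1" by (simp add: card_image inj_on_def)
    finally show ?thesis using eq by simp
  qed
  have "U = S0 \<union> S1" "B = S0 \<inter> S1" unfolding U_def B_def S0_def S1_def by auto
  hence cSU: "card S = card U + card B" using cS card_Un_Int[OF fS0] by simp
  have "U = A \<union> B" "A \<inter> B = {}" unfolding U_def B_def A_def by auto
  hence cU: "card U = card A + card B" using fU card_Un_disjoint by metis
  have cutsum: "cL Y = (\<Sum>e\<in>E. real (card {f \<in> lift_edges E Y. fst ` f = e \<and> (\<exists>p q. f = {p,q} \<and> p \<in> S \<and> q \<in> V \<times> UNIV - S)}))" for Y
    unfolding cL_def cut_lift[OF S] by simp
  have D: "real (cut_edges E U (V - U)) + real (cut_edges E B (V - B)) \<le> cL Y" for Y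
  proof -
    have "real (cut_edges E U (V - U)) + real (cut_edges E B (V - B)) =
      (\<Sum>e\<in>E. of_bool (\<exists>a b. e = {a,b} \<and> a \<in> U \<and> b \<in> V - U) + of_bool (\<exists>a b. e = {a,b} \<and> a \<in> B \<and> b \<in> V - B))"
      unfolding cut_edges_def card_filter_sum[OF finE] sum.distrib by simp
    also have "\<dots> \<le> cL Y" unfolding cutsum
    proof (rule sum_mono)
      fix e assume "e \<in> E"
      from of_nat_mono[OF edge_bound1[OF this S, of Y], where 'a=real]
      show "of_bool (\<exists>a b. e = {a,b} \<and> a \<in> U \<and> b \<in> V - U) + of_bool (\<exists>a b. e = {a,b} \<and> a \<in> B \<and> b \<in> V - B)
         \<le> real (card {f \<in> lift_edges E Y. fst ` f = e \<and> (\<exists>p q. f = {p,q} \<and> p \<in> S \<and> q \<in> V \<times> UNIV - S)})"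
        unfolding U_def B_def by simp
    qed
    finally show ?thesis .
  qed
  have R: "real d * real (card A) - 2 * real (M Y) \<le> cL Y" for Y
  proof -
    have "real d * real (card A) = real (\<Sum>v\<in>A. deg E v)" using degV sub(3) by (simp add: subset_iff)
    also have "\<dots> = (\<Sum>e\<in>E. real (card (e \<inter> A)))" unfolding handshake[OF sub(3)] by simp
    finally have h: "real d * real (card A) = (\<Sum>e\<in>E. real (card (e \<inter> A)))" .
    have "real d * real (card A) - 2 * real (M Y) = (\<Sum>e\<in>E. real (card (e \<inter> A)) - 2 * of_bool (e \<subseteq> A \<and> Y e = g e))"
      unfolding h M_def card_filter_sum[OF finE] sum_subtractf sum_distrib_left by simp
    also have "\<dots> \<le> cL Y" unfolding cutsum
    proof (rule sum_mono)
      fix e assume "e \<in> E"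
      from edge_bound2[OF this S, of Y]
      show "real (card (e \<inter> A)) - 2 * of_bool (e \<subseteq> A \<and> Y e = g e)
         \<le> real (card {f \<in> lift_edges E Y. fst ` f = e \<and> (\<exists>p q. f = {p,q} \<and> p \<in> S \<and> q \<in> V \<times> UNIV - S)})"
        unfolding A_def g_def by simp
    qed
    finally show ?thesis .
  qed
  have cLnn: "0 \<le> cL Y" for Y unfolding cL_def by simp
  have RHSnn: "0 \<le> 2 ^ card E * exp (- (real d * real (card V)) / 256)" by simp
  have goal: "real (card Bad) \<le> 2 ^ card E * exp (- (real d * real (card V)) / 256)"
  proof (cases "c \<le> 0")
    case True
    have "c * real d * real (card S) \<le> 0" using True by (simp add: mult_nonpos_nonneg)
    hence "Bad = {}" unfolding Bad_def using cLnn by (auto simp: not_less intro: order_trans)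
    thus ?thesis using RHSnn by simp
  next
    case False
    hence cpos: "c > 0" by simp
    hence phipos: "\<phi> > 0" and cphi: "c \<le> \<phi>" using c1 by linarith+
    have BU: "card B \<le> card U" using card_mono[OF fU(1) sub(4)] .
    show ?thesis
    proof (cases "2 * card U \<le> n")
      case True
      have "\<phi> * d * card U \<le> real (cut_edges E U (V - U))" using cutG[OF cond dpos sub(1)] True n_def by simp
      moreover have "\<phi> * d * card B \<le> real (cut_edges E B (V - B))" using cutG[OF cond dpos sub(2)] True BU n_def by simp
      ultimately have "\<phi> * d * card S \<le> cL Y" for Y using D[of Y] cSU by (simp add: distrib_left)
      moreover have "c * d * card S \<le> \<phi> * d * card S" using cphi by (simp add: mult_right_mono)
      ultimately have "Bad = {}" unfolding Bad_def by (auto simp: not_less intro: order_trans)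
      thus ?thesis using RHSnn by simp
    next
      case False
      hence Ubig: "n < 2 * card U" by simp
      show ?thesis
      proof (cases "4 * card A \<le> 3 * n")
        case True
        have VU: "V - (V - U) = U" using sub(1) by blast
        have cVU: "card (V - U) = n - card U" using card_Diff_subset[OF fU(1) sub(1)] n_def by simp
        have "card U \<le> n" using card_mono[OF finV sub(1)] n_def by simp
        have "\<phi> * d * card (V - U) \<le> real (cut_edges E (V - U) (V - (V - U)))"
          using cutG[OF cond dpos, of "V - U"] cVU Ubig n_def by simp
        hence c1': "\<phi> * d * (real n - card U) \<le> real (cut_edges E U (V - U))"
          unfolding VU cut_sym[of "V - U" U] cVU using \<open>card U \<le> n\<close> by (simp add: of_nat_diff)
        have c2': "\<phi> * d * card B \<le> real (cut_edges E B (V - B))"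
        proof -
          have "2 * card B \<le> card V" using Sn cSU cU by simp
          thus ?thesis using cutG[OF cond dpos sub(2)] by simp
        qed
        have "\<phi> * d * (real n - card A) \<le> cL Y" for Y
          using D[of Y] c1' c2' cU by (simp add: algebra_simps)
        moreover have "c * d * card S \<le> \<phi> * d * (real n - card A)"
        proof -
          have "real (card S) \<le> real n" using Sn n_def by simp
          hence "c * card S \<le> c * n" using cpos by simp
          also have "\<dots> \<le> \<phi> / 4 * n" using c1 by (intro mult_right_mono) auto
          also have "\<dots> \<le> \<phi> * (real n - card A)" using True phipos by (simp add: field_simps)
          finally have "c * card S \<le> \<phi> * (real n - card A)" .
          thus ?thesis using dpos by (simp add: mult.commute mult.left_commute)
        qed
        ultimately have "Bad = {}" unfolding Bad_def by (auto simp: not_less intro: order_trans)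
        thus ?thesis using RHSnn by simp
      next
        case False
        hence Abig: "3 * real n < 4 * real (card A)" by simp
        define z where "z = d * n"
        define t where "t = 23 * real z / 64"
        have sub2: "Bad \<subseteq> {Y \<in> PiE E (\<lambda>_. UNIV :: bool set). t \<le> real (card {e\<in>E. e \<subseteq> A \<and> Y e = g e})}"
        proof
          fix Y assume Y: "Y \<in> Bad"
          hence "cL Y < c * real d * real (card S)" unfolding Bad_def by simp
          also have "\<dots> \<le> 1/32 * real d * real n"
            using c2 Sn n_def cpos by (intro mult_mono) auto
          finally have "real d * real (card A) - 2 * real (M Y) < real d * real n / 32" using R[of Y] by simp
          moreover have "3 * real d * real n \<le> 4 * real d * real (card A)"
            using mult_left_mono[OF less_imp_le[OF Abig], of "real d"] by (simp add: algebra_simps)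
          ultimately have "t \<le> real (M Y)" unfolding t_def z_def by (simp only: of_nat_mult)
          thus "Y \<in> {Y \<in> PiE E (\<lambda>_. UNIV :: bool set). t \<le> real (card {e\<in>E. e \<subseteq> A \<and> Y e = g e})}"
            using Y unfolding Bad_def M_def by simp
        qed
        have "real (card Bad) \<le> real (card {Y \<in> PiE E (\<lambda>_. UNIV :: bool set). t \<le> real (card {e\<in>E. e \<subseteq> A \<and> Y e = g e})})"
          using card_mono[OF _ sub2] finE by (simp add: finite_PiE)
        also have "\<dots> \<le> exp (- t) * (1 + exp 1) ^ card E"
          using count_weight[OF finE, of "\<lambda>e y. e \<subseteq> A \<and> y = g e" t] by simp
        also have "\<dots> \<le> 2 ^ card E * exp (- (real z / 256))"
          unfolding t_def by (rule numeric2) (use card_E n_def z_def in simp)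
        finally show ?thesis unfolding z_def n_def by simp
      qed
    qed
  qed
  thus ?thesis unfolding Bad_def cL_def by simp
qed

end


theorem mainTheorem15:
  fixes V :: "'a set" and E :: "'a set set" and d n :: nat and \<phi> :: real
  assumes "simple_graph V E"
    and "regular V E d"
    and "card V = n"
    and "conductance V E \<ge> \<phi>"
  shows "measure_pmf.prob (pmf_of_set (PiE E (\<lambda>_. UNIV :: bool set)))
           {Y. conductance (V \<times> UNIV) (lift_edges E Y) \<ge> min (\<phi> / 4) (1 / 32)}
         \<ge> 1 - 2 ^ (2 * n) * exp (- (real d * real n) / 256)"
proof (cases "1 - 2 ^ (2 * n) * exp (- (real d * real n) / 256) \<le> 0")
  case True
  thus ?thesis using measure_nonneg order_trans by blast
next
  case False
  hence Rlt: "2 ^ (2 * n) * exp (- (real d * real n) / 256) < 1" by simp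
  have npos: "n > 0"
  proof (rule ccontr)
    assume "\<not> n > 0" hence "n = 0" by simp
    thus False using Rlt by simp
  qed
  have dpos: "d > 0"
  proof (rule ccontr)
    assume "\<not> d > 0" hence "d = 0" by simp
    hence "2 ^ (2 * n) * exp (- (real d * real n) / 256) = 2 ^ (2 * n)" by simp
    moreover have "(1::real) \<le> 2 ^ (2 * n)" by simp
    ultimately show False using Rlt by linarith
  qed
  interpret lg V E d using assms(1,2) by unfold_locales
  let ?c = "min (\<phi> / 4) (1 / 32)"
  define \<Omega> where "\<Omega> = PiE E (\<lambda>_. UNIV :: bool set)"
  define W where "W = V \<times> (UNIV :: bool set)"
  define P where "P = {S. S \<subseteq> W \<and> card S \<le> n}"
  define Bad where "Bad S = {Y \<in> \<Omega>. real (cut_edges (lift_edges E Y) S (W - S)) < ?c * real d * real (card S)}" for S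
  define G where "G = {Y. conductance (V \<times> UNIV) (lift_edges E Y) \<ge> ?c}"
  have finO: "finite \<Omega>" unfolding \<Omega>_def using finE by (simp add: finite_PiE)
  have neO: "\<Omega> \<noteq> {}" unfolding \<Omega>_def by (simp add: PiE_eq_empty_iff)
  have cardO: "card \<Omega> = 2 ^ card E" unfolding \<Omega>_def using finE by (simp add: card_PiE)
  have finW: "finite W" unfolding W_def using finV by simp
  have cardW: "card W = 2 * n" unfolding W_def using assms(3) finV by (simp add: card_cartesian_product)
  have good: "Y \<in> G" if Y: "Y \<in> \<Omega>" "Y \<notin> (\<Union>S\<in>P. Bad S)" for Y
  proof -
    let ?L = "lift_edges E Y"
    let ?X = "{cond_set ?L W S | S. S \<subseteq> W \<and> 0 < vol ?L S \<and> real (vol ?L S) \<le> real (vol ?L W) / 2}"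
    have "?X \<subseteq> cond_set ?L W ` Pow W" by auto
    hence finX: "finite ?X" using finW by (meson finite_subset finite_imageI finite_Pow_iff)
    have volW: "vol ?L W = d * (2 * n)" using vol_lift[of W Y] cardW unfolding W_def by simp
    obtain v0 where v0: "v0 \<in> V" using npos assms(3) by fastforce
    have "{(v0,False)} \<subseteq> W" using v0 unfolding W_def by simp
    moreover have "vol ?L {(v0,False)} = d" using vol_lift[of "{(v0,False)}" Y] v0 by simp
    moreover have "real d \<le> real (d * (2 * n)) / 2"
    proof -
      have "real d * 1 \<le> real d * real n" using npos by (intro mult_left_mono) auto
      thus ?thesis by simp
    qed
    ultimately have "cond_set ?L W {(v0,False)} \<in> ?X" using dpos volW by auto
    hence neX: "?X \<noteq> {}" by blast
    have "?c \<le> x" if "x \<in> ?X" for x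
    proof -
      obtain S where S: "x = cond_set ?L W S" "S \<subseteq> W" "0 < vol ?L S" "real (vol ?L S) \<le> real (vol ?L W) / 2"
        using \<open>x \<in> ?X\<close> by blast
      have vS: "vol ?L S = d * card S" using vol_lift[of S Y] S(2) unfolding W_def by simp
      have cS: "0 < card S" using S(3) vS by simp
      have "real (d * card S) \<le> real (d * n)" using S(4) unfolding vS volW by simp
      hence "card S \<le> n" using dpos by simp
      hence "S \<in> P" unfolding P_def using S(2) by simp
      hence "Y \<notin> Bad S" using Y(2) by blast
      hence "?c * real d * real (card S) \<le> real (cut_edges ?L S (W - S))" unfolding Bad_def using Y(1) by simp
      thus ?thesis unfolding S(1) cond_set_def vS using dpos cS
        by (simp add: pos_le_divide_eq mult.commute mult.left_commute)
    qed
    hence "?c \<le> Min ?X" using finX neX by (intro Min.boundedI) auto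
    thus ?thesis unfolding G_def conductance_def W_def by simp
  qed
  have finP: "finite P" unfolding P_def using finW by simp
  have cardP: "card P \<le> 2 ^ (2 * n)"
  proof -
    have "P \<subseteq> Pow W" unfolding P_def by auto
    hence "card P \<le> card (Pow W)" using finW by (simp add: card_mono)
    thus ?thesis using card_Pow[of W] cardW finW by simp
  qed
  have bS: "real (card (Bad S)) \<le> 2 ^ card E * exp (- (real d * real n) / 256)" if "S \<in> P" for S
  proof -
    have S: "S \<subseteq> V \<times> UNIV" "card S \<le> card V" using that assms(3) unfolding P_def W_def by auto
    have "Bad S = {Y \<in> PiE E (\<lambda>_. UNIV :: bool set). real (cut_edges (lift_edges E Y) S (V \<times> UNIV - S)) < ?c * real d * real (card S)}"
      unfolding Bad_def \<Omega>_def W_def by simp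
    thus ?thesis using perS[OF assms(4) dpos S, of ?c] assms(3) by simp
  qed
  have "real (card (\<Union>S\<in>P. Bad S)) \<le> (\<Sum>S\<in>P. real (card (Bad S)))"
    using card_UN_le[OF finP, of Bad] by (simp flip: of_nat_sum)
  also have "\<dots> \<le> (\<Sum>S\<in>P. 2 ^ card E * exp (- (real d * real n) / 256))" by (rule sum_mono) (rule bS)
  also have "\<dots> = real (card P) * (2 ^ card E * exp (- (real d * real n) / 256))" by simp
  also have "\<dots> \<le> 2 ^ (2 * n) * (2 ^ card E * exp (- (real d * real n) / 256))"
  proof (rule mult_right_mono)
    have "real (card P) \<le> real ((2::nat) ^ (2 * n))" using cardP by (simp only: of_nat_le_iff)
    thus "real (card P) \<le> 2 ^ (2 * n)" by simp
  qed simp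
  finally have UB: "real (card (\<Union>S\<in>P. Bad S)) \<le> 2 ^ (2 * n) * (2 ^ card E * exp (- (real d * real n) / 256))" .
  have sub: "\<Omega> - (\<Union>S\<in>P. Bad S) \<subseteq> \<Omega> \<inter> G" using good by blast
  have "real (card \<Omega>) - real (card (\<Union>S\<in>P. Bad S)) \<le> real (card (\<Omega> - (\<Union>S\<in>P. Bad S)))"
  proof -
    have "card \<Omega> \<le> card (\<Omega> - (\<Union>S\<in>P. Bad S)) + card (\<Union>S\<in>P. Bad S)"
    proof -
      have "card \<Omega> \<le> card ((\<Omega> - (\<Union>S\<in>P. Bad S)) \<union> (\<Union>S\<in>P. Bad S))"
      proof (rule card_mono)
        have "(\<Union>S\<in>P. Bad S) \<subseteq> \<Omega>" unfolding Bad_def by blast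
        thus "finite ((\<Omega> - (\<Union>S\<in>P. Bad S)) \<union> (\<Union>S\<in>P. Bad S))" using finO finite_subset by blast
      qed blast
      also have "\<dots> \<le> card (\<Omega> - (\<Union>S\<in>P. Bad S)) + card (\<Union>S\<in>P. Bad S)" by (rule card_Un_le)
      finally show ?thesis .
    qed
    thus ?thesis by linarith
  qed
  also have "\<dots> \<le> real (card (\<Omega> \<inter> G))" using card_mono[OF _ sub] finO by simp
  finally have low: "real (card \<Omega>) - 2 ^ (2 * n) * (2 ^ card E * exp (- (real d * real n) / 256)) \<le> real (card (\<Omega> \<inter> G))"
    using UB by linarith
  have "measure_pmf.prob (pmf_of_set \<Omega>) G = real (card (\<Omega> \<inter> G)) / real (card \<Omega>)"
    by (rule measure_pmf_of_set[OF neO finO])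
  also have "\<dots> \<ge> 1 - 2 ^ (2 * n) * exp (- (real d * real n) / 256)"
  proof -
    have pos: "(0::real) < 2 ^ card E" by simp
    have "1 - 2 ^ (2 * n) * exp (- (real d * real n) / 256)
       = (real (card \<Omega>) - 2 ^ (2 * n) * (2 ^ card E * exp (- (real d * real n) / 256))) / real (card \<Omega>)"
      unfolding cardO using pos by (simp add: field_simps)
    also have "\<dots> \<le> real (card (\<Omega> \<inter> G)) / real (card \<Omega>)"
      using low cardO by (intro divide_right_mono) auto
    finally show ?thesis .
  qed
  finally show ?thesis unfolding \<Omega>_def G_def .
qed


end
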